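(* Let $n\in\mathbb{N}$ and let $c_n$ be the entire function $c_n(\eta)=\sum_{l=0}^\infty c(n;l)\eta^{2nl}$, where $$c(n;l)=\frac{(-1)^l n}{(2n)^{2l+\frac{1}{2n}}\,\Gamma\!\left(l+\frac{1}{2n}\right)\,l!}.$$ Then for every $\omega\in\mathbb{R}$, $$e^{-\frac{\omega^{2n}}{2n}}=\int_{-\infty}^{\infty}c_n(\omega t)\,e^{-\frac{t^{2n}}{2n}}\,dt=\int_{-\infty}^{\infty}\sum_{l=0}^\infty c(n;l)(\omega t)^{2nl}e^{-\frac{t^{2n}}{2n}}\,dt.$$ *)

theory Defs
  imports "HOL-Analysis.Analysis"
begin

definition coef :: "nat \<Rightarrow> nat \<Rightarrow> real" where
  "coef n l = ((-1) ^ l * real n) /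
     ((2 * real n) powr (2 * real l + 1 / (2 * real n)) *
      Gamma (real l + 1 / (2 * real n)) * fact l)"

definition cfun :: "nat \<Rightarrow> real \<Rightarrow> real" where
  "cfun n \<eta> = (\<Sum>l. coef n l * \<eta> ^ (2 * n * l))"

end

theory Submission
  imports Defs
begin


lemma nn_sup_ind:
  fixes h :: "real \<Rightarrow> ennreal" and s :: "nat \<Rightarrow> real"
  assumes inc: "incseq s" and unb: "\<And>x. \<exists>m. x \<le> s m"
    and [measurable]: "h \<in> borel_measurable borel"
  shows "(\<integral>\<^sup>+x. h x * indicator {0..} x \<partial>lborel) = (SUP m. \<integral>\<^sup>+x. h x * indicator {0..s m} x \<partial>lborel)"
proof -
  have "(SUP m. \<integral>\<^sup>+x. h x * indicator {0..s m} x \<partial>lborel) = (\<integral>\<^sup>+x. (SUP m. h x * indicator {0..s m} x) \<partial>lborel)"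
  proof (rule nn_integral_monotone_convergence_SUP[symmetric])
    show "incseq (\<lambda>m x. h x * indicator {0..s m} x)"
      using inc by (auto simp: incseq_def le_fun_def indicator_def intro: order_trans)
  qed simp
  also have "\<dots> = (\<integral>\<^sup>+x. h x * indicator {0..} x \<partial>lborel)"
  proof (rule nn_integral_cong)
    fix x
    show "(SUP m. h x * indicator {0..s m} x) = h x * indicator {0..} x"
    proof (cases "x \<ge> 0")
      case True
      obtain m where m: "x \<le> s m" using unb by blast
      show ?thesis
      proof (rule antisym)
        show "(SUP m. h x * indicator {0..s m} x) \<le> h x * indicator {0..} x"
          by (rule SUP_least) (auto simp: indicator_def)
        have "h x * indicator {0..} x = h x * indicator {0..s m} x" using True m by (simp add: indicator_def)
        also have "\<dots> \<le> (SUP m. h x * indicator {0..s m} x)" by (rule SUP_upper) simp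
        finally show "h x * indicator {0..} x \<le> (SUP m. h x * indicator {0..s m} x)" .
      qed
    next
      case False
      then show ?thesis by (simp add: indicator_def)
    qed
  qed
  finally show ?thesis ..
qed




lemma pointwise_sub:
  fixes n l :: nat and t :: real
  assumes n: "n \<ge> 1" and t: "t > 0"
  defines "p \<equiv> real l + 1/(2*real n)"
  shows "(t^(2*n)/(2*real n)) powr (p-1) / exp (t^(2*n)/(2*real n)) * t^(2*n-1)
       = (2*real n) powr (1-p) * (t^(2*n*l) * exp (-(t^(2*n))/(2*real n)))"
proof -
  have nn: "2*real n > 0" using n by simp
  have "(t^(2*n)/(2*real n)) powr (p-1) = t powr (real (2*n) * (p-1)) / (2*real n) powr (p-1)"
    using t nn by (simp add: powr_divide powr_realpow[symmetric] powr_powr)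
  moreover have "t^(2*n-1) = t powr (real (2*n) - 1)"
  proof -
    have "real (2*n-1) = real (2*n) - 1" using n by (simp add: of_nat_diff)
    then show ?thesis using t by (metis powr_realpow)
  qed
  moreover have "t powr (real (2*n) * (p-1)) * t powr (real (2*n) - 1) = t^(2*n*l)"
  proof -
    have "real (2*n) * (p-1) + (real (2*n) - 1) = real (2*n*l)"
      using n by (simp add: p_def field_simps)
    then show ?thesis using t by (metis powr_add powr_realpow)
  qed
  moreover have "1 / (2*real n) powr (p-1) = (2*real n) powr (1-p)"
    using nn by (simp add: powr_minus_divide[symmetric] powr_minus)
  ultimately show ?thesis
    by (simp add: exp_minus field_simps) (metis times_divide_eq_right mult_1_right)
qed




lemma half_moment:
  fixes n l :: nat
  assumes n: "n \<ge> 1"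
  defines "p \<equiv> real l + 1/(2*real n)"
  shows "(\<integral>\<^sup>+t. ennreal (t^(2*n*l) * exp (-(t^(2*n))/(2*real n))) * indicator {0..} t \<partial>lborel)
     = ennreal ((2*real n) powr (p-1) * Gamma p)"
proof -
  have nn: "2*real n > 0" using n by simp
  have p: "p > 0" using nn by (simp add: p_def add_nonneg_pos)
  define F where "F u = u powr (p-1) / exp u" for u :: real
  define g where "g t = t^(2*n)/(2*real n)" for t :: real
  define g' where "g' t = t^(2*n-1)" for t :: real
  define c where "c = (2*real n) powr (1-p)"
  define H where "H t = t^(2*n*l) * exp (-(t^(2*n))/(2*real n))" for t :: real
  have c: "c > 0" using nn by (simp add: c_def)
  have [measurable]: "F \<in> borel_measurable borel" unfolding F_def by measurable
  have [measurable]: "H \<in> borel_measurable borel" unfolding H_def by measurable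
  have G: "(\<integral>\<^sup>+u. ennreal (F u) * indicator {0..} u \<partial>lborel) = ennreal (Gamma p)"
    using nn_integral_has_integral_lebesgue'[OF _ Gamma_integral_real[OF p]]
    by (simp add: F_def)
  have g0: "g 0 = 0" using n by (simp add: g_def)
  have incg: "incseq (\<lambda>m. g (real m))"
    unfolding incseq_def g_def using nn
    by (auto intro!: divide_right_mono power_mono)
  have unbg: "\<exists>m. x \<le> g (real m)" for x
  proof -
    define m where "m = nat \<lceil>2*real n*\<bar>x\<bar>\<rceil> + 1"
    have "- 1 < 2*real n*\<bar>x\<bar>" by (smt (verit) abs_ge_zero mult_nonneg_nonneg of_nat_0_le_iff)
    then have m1: "real m \<ge> 1" by (simp add: m_def)
    have "2*real n*\<bar>x\<bar> \<le> real m" unfolding m_def by linarith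
    also have "real m \<le> real m ^ (2*n)" using m1 n by (intro self_le_power) auto
    finally have "\<bar>x\<bar> \<le> g (real m)" using nn by (simp add: g_def field_simps)
    then show ?thesis by (meson abs_ge_self order_trans)
  qed
  have unbr: "\<exists>m. x \<le> real m" for x :: real
    using real_arch_simple by blast
  have sub: "(\<integral>\<^sup>+u. ennreal (F u) * indicator {0..g (real m)} u \<partial>lborel)
      = ennreal c * (\<integral>\<^sup>+t. ennreal (H t) * indicator {0..real m} t \<partial>lborel)" for m
  proof -
    have "(\<integral>\<^sup>+u. ennreal (F u) * indicator {0..g (real m)} u \<partial>lborel)
        = (\<integral>\<^sup>+u. ennreal (F u * indicator {g 0..g (real m)} u) \<partial>lborel)"
      by (intro nn_integral_cong) (simp add: g0 indicator_def)
    also have "\<dots> = (\<integral>\<^sup>+t. ennreal (F (g t) * g' t * indicator {0..real m} t) \<partial>lborel)"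
    proof (rule nn_integral_substitution)
      show "set_borel_measurable borel {g 0..g (real m)} F"
        by (simp add: set_borel_measurable_def) measurable
      show "(g has_real_derivative g' x) (at x)" if "x \<in> {0..real m}" for x
        unfolding g_def g'_def using n
        by (auto intro!: derivative_eq_intros simp: field_simps)
      show "continuous_on {0..real m} g'" unfolding g'_def by (intro continuous_intros)
      show "0 \<le> g' x" if "x \<in> {0..real m}" for x using that by (simp add: g'_def)
    qed simp
    also have "\<dots> = (\<integral>\<^sup>+t. ennreal c * (ennreal (H t) * indicator {0..real m} t) \<partial>lborel)"
    proof (rule nn_integral_cong_AE)
      show "AE t in lborel. ennreal (F (g t) * g' t * indicator {0..real m} t)
          = ennreal c * (ennreal (H t) * indicator {0..real m} t)"
        using AE_lborel_singleton[of 0]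
      proof eventually_elim
        case (elim t)
        show ?case
        proof (cases "t \<in> {0..real m}")
          case True
          then have t: "t > 0" using elim by auto
          have "F (g t) * g' t = c * H t"
            using pointwise_sub[OF n t, of l] unfolding F_def g_def g'_def c_def H_def p_def .
          moreover have "H t \<ge> 0" using t by (simp add: H_def)
          ultimately show ?thesis using True c by (simp add: ennreal_mult)
        qed simp
      qed
    qed
    also have "\<dots> = ennreal c * (\<integral>\<^sup>+t. ennreal (H t) * indicator {0..real m} t \<partial>lborel)"
      by (rule nn_integral_cmult) measurable
    finally show ?thesis .
  qed
  have "ennreal (Gamma p) = (SUP m. \<integral>\<^sup>+u. ennreal (F u) * indicator {0..g (real m)} u \<partial>lborel)"
    using G nn_sup_ind[OF incg unbg, of "\<lambda>u. ennreal (F u)"] by simp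
  also have "\<dots> = ennreal c * (SUP m. \<integral>\<^sup>+t. ennreal (H t) * indicator {0..real m} t \<partial>lborel)"
    by (simp add: sub SUP_mult_left_ennreal)
  also have "\<dots> = ennreal c * (\<integral>\<^sup>+t. ennreal (H t) * indicator {0..} t \<partial>lborel)"
    using nn_sup_ind[of real, OF _ unbr, of "\<lambda>u. ennreal (H u)"] by (simp add: incseq_def)
  finally have eq: "ennreal (Gamma p) = ennreal c * (\<integral>\<^sup>+t. ennreal (H t) * indicator {0..} t \<partial>lborel)" .
  have "(\<integral>\<^sup>+t. ennreal (H t) * indicator {0..} t \<partial>lborel)
      = ennreal (1/c) * (ennreal c * (\<integral>\<^sup>+t. ennreal (H t) * indicator {0..} t \<partial>lborel))"
    using c by (simp add: mult.assoc[symmetric] ennreal_mult[symmetric])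
  also have "\<dots> = ennreal (1/c * Gamma p)"
    using c eq[symmetric] Gamma_real_pos[OF p] by (simp add: ennreal_mult[symmetric])
  also have "1/c * Gamma p = (2*real n) powr (p-1) * Gamma p"
    using nn by (simp add: c_def powr_minus_divide[symmetric] powr_minus)
  finally show ?thesis by (simp add: H_def)
qed




lemma full_moment:
  fixes n l :: nat
  assumes n: "n \<ge> 1"
  defines "p \<equiv> real l + 1/(2*real n)"
  shows "(\<integral>\<^sup>+t. ennreal (t^(2*n*l) * exp (-(t^(2*n))/(2*real n))) \<partial>lborel)
     = ennreal ((2*real n) powr p * Gamma p / real n)"
proof -
  define H where "H t = t^(2*n*l) * exp (-(t^(2*n))/(2*real n))" for t :: real
  have nn: "2*real n > 0" using n by simp
  have p: "p > 0" using nn by (simp add: p_def add_nonneg_pos)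
  have [measurable]: "H \<in> borel_measurable borel" unfolding H_def by measurable
  have Hneg: "H (-x) = H x" for x
    by (simp add: H_def power_mult[symmetric] mult.assoc)
  have half: "(\<integral>\<^sup>+t. ennreal (H t) * indicator {0..} t \<partial>lborel) = ennreal ((2*real n) powr (p-1) * Gamma p)"
    using half_moment[OF n, of l] by (simp add: H_def p_def)
  have "(\<integral>\<^sup>+t. ennreal (H t) \<partial>lborel)
     = (\<integral>\<^sup>+t. ennreal (H t) * indicator {0..} t + ennreal (H t) * indicator {..<0} t \<partial>lborel)"
    by (intro nn_integral_cong) (simp add: indicator_def)
  also have "\<dots> = (\<integral>\<^sup>+t. ennreal (H t) * indicator {0..} t \<partial>lborel) + (\<integral>\<^sup>+t. ennreal (H t) * indicator {..<0} t \<partial>lborel)"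
    by (rule nn_integral_add) measurable
  also have "(\<integral>\<^sup>+t. ennreal (H t) * indicator {..<0} t \<partial>lborel)
     = (\<integral>\<^sup>+t. ennreal (H (0 + (-1)*t)) * indicator {..<0} (0 + (-1)*t) \<partial>lborel)"
    using nn_integral_real_affine[of "\<lambda>t. ennreal (H t) * indicator {..<0} t" "-1" 0] by simp
  also have "\<dots> = (\<integral>\<^sup>+t. ennreal (H t) * indicator {0..} t \<partial>lborel)"
  proof (rule nn_integral_cong_AE)
    show "AE t in lborel. ennreal (H (0 + (-1)*t)) * indicator {..<0} (0 + (-1)*t) = ennreal (H t) * indicator {0..} t"
      using AE_lborel_singleton[of 0]
      by eventually_elim (auto simp: Hneg indicator_def)
  qed
  also have "(\<integral>\<^sup>+t. ennreal (H t) * indicator {0..} t \<partial>lborel) + (\<integral>\<^sup>+t. ennreal (H t) * indicator {0..} t \<partial>lborel)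
      = ennreal (2 * ((2*real n) powr (p-1) * Gamma p))"
    using half Gamma_real_pos[OF p] by (simp add: ennreal_plus[symmetric] del: ennreal_plus)
  also have "2 * ((2*real n) powr (p-1) * Gamma p) = (2*real n) powr p * Gamma p / real n"
    using nn by (simp add: powr_diff field_simps)
  finally show ?thesis by (simp add: H_def)
qed




lemma coef_Suc:
  fixes n l :: nat assumes n: "n \<ge> 1"
  shows "coef n (Suc l) = - coef n l / ((2*real n)^2 * (real l + 1/(2*real n)) * (real l + 1))"
proof -
  define s where "s = 1/(2*real n)"
  have nn: "2*real n > 0" using n by simp
  have s: "s > 0" using nn by (simp add: s_def)
  have G: "Gamma (real (Suc l) + s) = (real l + s) * Gamma (real l + s)"
  proof -
    have "real l + s \<notin> \<int>\<^sub>\<le>\<^sub>0" 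
    proof
      assume "real l + s \<in> \<int>\<^sub>\<le>\<^sub>0"
      then have "real l + s \<le> 0" by (rule nonpos_Ints_nonpos)
      with s show False by simp
    qed
    then show ?thesis using Gamma_plus1[of "real l + s"] by (simp add: add_ac)
  qed
  have P: "(2*real n) powr (2 * real (Suc l) + s) = (2*real n) powr (2 * real l + s) * (2*real n)^2"
  proof -
    have "2 * real (Suc l) + s = (2 * real l + s) + 2" by simp
    then show ?thesis using nn by (simp only: powr_add powr_numeral)
  qed
  have g0: "Gamma (real l + s) > 0" using s by (intro Gamma_real_pos) (simp add: add_nonneg_pos)
  have ls: "real l + s > 0" using s by (simp add: add_nonneg_pos)
  show ?thesis
    unfolding coef_def s_def[symmetric] G P
    using g0 ls nn by (simp add: field_simps)
qed

lemma summable_coef: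
  fixes n :: nat and x :: real assumes n: "n \<ge> 1"
  shows "summable (\<lambda>l. norm (coef n l * x^(2*n*l)))"
proof (rule summable_ratio_test)
  define z where "z = x^(2*n)"
  have z: "z \<ge> 0" by (simp add: z_def power_mult)
  define N where "N = nat \<lceil>z\<rceil> + 1"
  show "(1/2::real) < 1" by simp
  show "norm (norm (coef n (Suc l) * x ^ (2 * n * Suc l))) \<le> 1/2 * norm (norm (coef n l * x ^ (2 * n * l)))"
    if l: "N \<le> l" for l
  proof -
    define D where "D = (2*real n)^2 * (real l + 1/(2*real n)) * (real l + 1)"
    define A where "A = norm (coef n l * x ^ (2 * n * l))"
    have A: "A \<ge> 0" by (simp add: A_def)
    have l1: "real l \<ge> 1" using l by (simp add: N_def)
    have lz: "real l + 1 > z" using l z unfolding N_def by linarith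
    have "2*real n \<ge> 2" using n by simp
    then have "(2*real n)^2 \<ge> 2^2" by (intro power_mono) auto
    then have n4: "(2*real n)^2 \<ge> 4" by simp
    have "1/(2*real n) \<ge> 0" by simp
    then have ls: "real l + 1/(2*real n) \<ge> 1" using l1 by linarith
    have "(2*real n)^2 * (real l + 1/(2*real n)) \<ge> 4 * 1"
      using n4 ls by (intro mult_mono) auto
    then have D: "D \<ge> 4 * (real l + 1)" unfolding D_def by (intro mult_right_mono) auto
    have "(0::real) < 4 * (real l + 1)" by simp
    then have Dpos: "D > 0" using D by (rule less_le_trans)
    have zD: "z / D \<le> 1/2" using D z lz Dpos by (simp add: field_simps)
    have eq: "norm (coef n (Suc l) * x ^ (2 * n * Suc l)) = A * (z / D)"
    proof -
      have e1: "2*n*Suc l = 2*n*l + 2*n" by simp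
      have "x ^ (2 * n * Suc l) = x^(2*n*l) * z" unfolding e1 z_def by (rule power_add)
      moreover have "coef n (Suc l) = - coef n l / D" unfolding D_def by (rule coef_Suc[OF n])
      ultimately have "norm (coef n (Suc l) * x ^ (2 * n * Suc l)) = (\<bar>coef n l\<bar> * \<bar>x^(2*n*l)\<bar>) * (\<bar>z\<bar> / \<bar>D\<bar>)"
        by (simp add: abs_mult abs_divide)
      also have "\<dots> = A * (z/D)" using z Dpos by (simp add: A_def abs_mult)
      finally show ?thesis .
    qed
    show "norm (norm (coef n (Suc l) * x ^ (2 * n * Suc l))) \<le> 1/2 * norm (norm (coef n l * x ^ (2 * n * l)))"
    proof -
      have "A*(z/D) \<le> A*(1/2)" using zD A by (rule mult_left_mono)
      then show ?thesis using eq unfolding A_def by simp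
    qed
  qed
qed




lemma alg_aux:
  fixes a N P G F w Q :: real
  assumes "N \<noteq> 0" "G \<noteq> 0" "P \<noteq> 0" "F \<noteq> 0"
  shows "(a*N/(P*G*F)) * w * (Q*G/N) = a*w/F*(Q/P)"
  using assms by (simp add: field_simps)

lemma coef_K:
  fixes n l :: nat and \<omega> :: real assumes n: "n \<ge> 1"
  defines "p \<equiv> real l + 1/(2*real n)"
  shows "coef n l * \<omega>^(2*n*l) * ((2*real n) powr p * Gamma p / real n) = (- (\<omega>^(2*n)/(2*real n)))^l / fact l"
proof -
  have nn: "2*real n > 0" using n by simp
  have p: "p > 0" using nn by (simp add: p_def add_nonneg_pos)
  have g: "Gamma p > 0" using p by (rule Gamma_real_pos)
  have pw: "(2*real n) powr p / (2*real n) powr (2 * real l + 1 / (2 * real n)) = 1 / (2*real n)^l"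
  proof -
    have "(2*real n) powr p / (2*real n) powr (2 * real l + 1 / (2 * real n)) = (2*real n) powr (- real l)"
      unfolding powr_diff[symmetric] p_def by simp
    also have "\<dots> = 1 / (2*real n)^l" using nn by (simp add: powr_minus powr_realpow divide_inverse)
    finally show ?thesis .
  qed
  have "coef n l * \<omega>^(2*n*l) * ((2*real n) powr p * Gamma p / real n)
     = (-1)^l * \<omega>^(2*n*l) / fact l * ((2*real n) powr p / (2*real n) powr (2 * real l + 1 / (2 * real n)))"
    unfolding coef_def p_def[symmetric] using g n by (intro alg_aux) auto
  also have "\<dots> = (-1)^l * \<omega>^(2*n*l) / fact l / (2*real n)^l" by (simp add: pw)
  also have "\<dots> = ((-1)^l * \<omega>^(2*n*l) / (2*real n)^l) / fact l"
    by (simp add: divide_divide_eq_left mult.commute)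
  also have "(-1)^l * \<omega>^(2*n*l) / (2*real n)^l = (- (\<omega>^(2*n)/(2*real n)))^l"
  proof -
    have gen: "(-(a/b))^l = (-1)^l * a^l / b^l" for a b :: real
      by (subst power_minus) (simp add: power_divide)
    show ?thesis unfolding gen by (simp add: power_mult)
  qed
  finally show ?thesis .
qed




theorem lemma1:
  fixes n :: nat and \<omega> :: real
  assumes "n \<ge> 1"
  shows "((\<lambda>t. cfun n (\<omega> * t) * exp (- (t ^ (2 * n)) / (2 * real n)))
           has_integral exp (- (\<omega> ^ (2 * n)) / (2 * real n))) UNIV"
proof -
  note n = assms
  define E where "E t = exp (- (t ^ (2 * n)) / (2 * real n))" for t :: real
  define a where "a = \<omega>^(2*n)/(2*real n)"
  define p where "p l = real l + 1/(2*real n)" for l :: nat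
  define K where "K l = (2*real n) powr p l * Gamma (p l) / real n" for l :: nat
  define m where "m l t = t^(2*n*l) * E t" for l :: nat and t :: real
  define f where "f l t = coef n l * (\<omega>*t)^(2*n*l) * E t" for l :: nat and t :: real
  have nn: "2*real n > 0" using n by simp
  have a0: "a \<ge> 0" using nn by (simp add: a_def power_mult)
  have w0: "\<omega>^(2*n*l) \<ge> 0" for l by (simp add: power_mult mult.assoc)
  have [measurable]: "m l \<in> borel_measurable borel" for l unfolding m_def E_def by measurable
  have K0: "K l \<ge> 0" for l
  proof -
    have "p l > 0" using nn by (simp add: p_def add_nonneg_pos)
    then show ?thesis using Gamma_real_pos[of "p l"] by (simp add: K_def)
  qed
  have mI: "integrable lborel (m l) \<and> integral\<^sup>L lborel (m l) = K l" for l
  proof (rule nn_integral_eq_integrable[THEN iffD1])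
    show "(\<integral>\<^sup>+t. ennreal (m l t) \<partial>lborel) = ennreal (K l)"
      using full_moment[OF n, of l] by (simp add: m_def E_def K_def p_def)
    show "AE t in lborel. 0 \<le> m l t" by (simp add: m_def E_def power_mult mult.assoc)
  qed (auto simp: K0)
  have fm: "f l = (\<lambda>t. (coef n l * \<omega>^(2*n*l)) * m l t)" for l
    by (auto simp: f_def m_def power_mult_distrib)
  have nfm: "(\<lambda>t. norm (f l t)) = (\<lambda>t. (\<bar>coef n l\<bar> * \<omega>^(2*n*l)) * m l t)" for l
    by (auto simp: f_def m_def E_def power_mult_distrib abs_mult w0 power_mult mult.assoc)
  have fI: "integrable lborel (f l)" for l
    unfolding fm using mI by auto
  have ckey: "coef n l * \<omega>^(2*n*l) * K l = (-a)^l / fact l" for l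
    unfolding K_def p_def a_def using coef_K[OF n] by simp
  have fint: "integral\<^sup>L lborel (f l) = (-a)^l / fact l" for l
    unfolding fm using mI ckey by simp
  have nint: "(\<integral>t. norm (f l t) \<partial>lborel) = a^l / fact l" for l
  proof -
    have "(\<integral>t. norm (f l t) \<partial>lborel) = \<bar>coef n l\<bar> * \<omega>^(2*n*l) * K l"
      unfolding nfm using mI by simp
    also have "\<dots> = \<bar>coef n l * \<omega>^(2*n*l) * K l\<bar>" using K0 w0 by (simp add: abs_mult)
    also have "\<dots> = a^l / fact l" unfolding ckey using a0 by (simp add: abs_mult power_abs)
    finally show ?thesis .
  qed
  have sumexp: "(\<lambda>l. x^l / fact l) sums exp x" for x :: real
    using exp_converges[of x] by (simp add: divide_inverse mult.commute)
  have summ_pt: "summable (\<lambda>l. coef n l * (\<omega>*t)^(2*n*l))" for t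
    using summable_coef[OF n] by (rule summable_norm_cancel)
  have AEs: "AE t in lborel. summable (\<lambda>l. norm (f l t))"
  proof (rule AE_I2)
    fix t
    have "summable (\<lambda>l. norm (coef n l * (\<omega>*t)^(2*n*l)) * E t)"
      using summable_coef[OF n] by (rule summable_mult2)
    then show "summable (\<lambda>l. norm (f l t))"
      by (simp add: f_def E_def abs_mult)
  qed
  have sn: "summable (\<lambda>l. (\<integral>t. norm (f l t) \<partial>lborel))"
    unfolding nint using sumexp[of a] by (rule sums_summable)
  have int: "integrable lborel (\<lambda>t. \<Sum>l. f l t)"
    by (rule integrable_suminf[OF fI AEs sn])
  have "(\<integral>t. (\<Sum>l. f l t) \<partial>lborel) = (\<Sum>l. integral\<^sup>L lborel (f l))"
    by (rule integral_suminf[OF fI AEs sn])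
  also have "\<dots> = exp (-a)" unfolding fint using sumexp[of "-a"] by (rule sums_unique[symmetric])
  finally have ival: "(\<integral>t. (\<Sum>l. f l t) \<partial>lborel) = exp (-a)" .
  have feq: "(\<lambda>t. \<Sum>l. f l t) = (\<lambda>t. cfun n (\<omega> * t) * exp (- (t ^ (2 * n)) / (2 * real n)))"
  proof
    fix t
    show "(\<Sum>l. f l t) = cfun n (\<omega> * t) * exp (- (t ^ (2 * n)) / (2 * real n))"
      unfolding cfun_def f_def E_def using suminf_mult2[OF summ_pt[of t]] by simp
  qed
  have "((\<lambda>t. \<Sum>l. f l t) has_integral exp (-a)) UNIV"
    using has_integral_integral_real[OF int] ival by simp
  then show ?thesis unfolding feq a_def by simp
qed


end
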